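(* Let $m>0$, $K\neq0$, and consider the CMC slicing of the Schwarzschild spacetime with integration constant $H=0$ (the case in which the second fundamental form of each slice is isotropic, $K_{ij}=\tfrac13 K g_{ij}$). Then every solution $\sigma_-$ of the ingoing wave phase equation on $(2m,\infty)$ is unbounded as $r\to 2m^+$; i.e. no bounded ingoing wave phase coordinate exists across the event horizon on such slices.
   Context: The CMC-sliced Schwarzschild metric is $ds^2=-(1-2m/r)dt^2+2vP^{-1/2}dt\,dr+r^4P^{-1}dr^2+r^2d\Omega^2$ with $v=Kr^3/3-H$, $P=v^2+(1-2m/r)r^4$, $K$ the mean curvature of the slices $t=$const, $H$ a real constant (here $H=0$). The ingoing wave phase equation is $(1-2m/r)\frac{3}{K}\frac{d\sigma_-}{dr}=vP^{-1/2}+b_-$ with $b_-=-1$ if $K<0$ and $b_-=+1$ if $K>0$. The trace-free part of the second fundamental form of the slices vanishes identically exactly when $H=0$. *)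

theory Defs
  imports Complex_Main
begin

definition cmc_v :: "real \<Rightarrow> real \<Rightarrow> real \<Rightarrow> real" where
  "cmc_v K H r = K * r ^ 3 / 3 - H"

definition cmc_P :: "real \<Rightarrow> real \<Rightarrow> real \<Rightarrow> real \<Rightarrow> real" where
  "cmc_P m K H r = (cmc_v K H r) ^ 2 + (1 - 2 * m / r) * r ^ 4"

definition b_minus :: "real \<Rightarrow> real" where
  "b_minus K = (if K < 0 then -1 else 1)"

definition ingoing_phase_solution ::
  "real \<Rightarrow> real \<Rightarrow> real \<Rightarrow> (real \<Rightarrow> real) \<Rightarrow> bool" where
  "ingoing_phase_solution m K H \<sigma> \<longleftrightarrow>
     (\<forall>r > 2 * m. \<exists>d. (\<sigma> has_real_derivative d) (at r) \<and>
        (1 - 2 * m / r) * (3 / K) * d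
          = cmc_v K H r / sqrt (cmc_P m K H r) + b_minus K)"

end

theory Submission
  imports Defs
begin

lemma deriv_lower:
  fixes m K d x :: real
  assumes m: "m > 0" and K: "K \<noteq> 0" and x: "x > 2 * m"
    and eq: "(1 - 2 * m / x) * (3 / K) * d = cmc_v K 0 x / sqrt (cmc_P m K 0 x) + b_minus K"
  shows "d \<ge> (2 * m * \<bar>K\<bar> / 3) / (x - 2 * m)"
proof -
  define R where "R = cmc_v K 0 x / sqrt (cmc_P m K 0 x) + b_minus K"
  have xpos: "x > 0" using x m by linarith
  have fpos: "1 - 2 * m / x > 0" using x xpos by (simp add: field_simps)
  have Ppos: "cmc_P m K 0 x \<ge> 0" unfolding cmc_P_def
    using fpos xpos by (intro add_nonneg_nonneg) auto
  have KR: "K * R \<ge> \<bar>K\<bar>"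
  proof (cases "K > 0")
    case True
    have "cmc_v K 0 x \<ge> 0" using True xpos by (simp add: cmc_v_def)
    hence "cmc_v K 0 x / sqrt (cmc_P m K 0 x) \<ge> 0" using Ppos by (intro divide_nonneg_nonneg) auto
    hence "R \<ge> 1" using True by (simp add: R_def b_minus_def)
    thus ?thesis using True by simp
  next
    case False
    hence Kn: "K < 0" using K by simp
    have "cmc_v K 0 x \<le> 0" using Kn xpos
      by (simp add: cmc_v_def mult_nonpos_nonneg)
    hence "cmc_v K 0 x / sqrt (cmc_P m K 0 x) \<le> 0" using Ppos by (intro divide_nonpos_nonneg) auto
    hence "R \<le> -1" using Kn by (simp add: R_def b_minus_def)
    hence "K * R \<ge> -K" using Kn by (metis mult_le_cancel_left_neg mult_minus1_right)
    thus ?thesis using Kn by simp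
  qed
  have f: "1 - 2 * m / x = (x - 2 * m) / x" using xpos by (simp add: field_simps)
  have "((x - 2 * m) / x) * (3 / K) * d = R" using eq f R_def by simp
  hence dd: "d = K * R * x / (3 * (x - 2 * m))" using K xpos x by (simp add: field_simps)
  have "(2 * m * \<bar>K\<bar> / 3) / (x - 2 * m) = (\<bar>K\<bar> * (2*m)) / (3 * (x - 2 * m))" by simp
  also have "\<dots> \<le> (K * R * x) / (3 * (x - 2 * m))"
    apply (rule divide_right_mono)
    apply (rule mult_mono) using KR x m by auto
  finally show ?thesis using dd by simp
qed

theorem mainTheorem2:
  fixes m K :: real and \<sigma> :: "real \<Rightarrow> real"
  assumes "m > 0" and "K \<noteq> 0"
    and "ingoing_phase_solution m K 0 \<sigma>"
  shows "\<not> (\<exists>B. \<forall>\<^sub>F r in at_right (2 * m). \<bar>\<sigma> r\<bar> \<le> B)"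
proof
  assume "\<exists>B. \<forall>\<^sub>F r in at_right (2 * m). \<bar>\<sigma> r\<bar> \<le> B"
  then obtain B where "\<forall>\<^sub>F r in at_right (2 * m). \<bar>\<sigma> r\<bar> \<le> B" by blast
  then obtain \<delta> where dp: "\<delta> > 0" and bd: "\<And>r. 2*m < r \<Longrightarrow> r < 2*m + \<delta> \<Longrightarrow> \<bar>\<sigma> r\<bar> \<le> B"
  proof -
    from \<open>\<forall>\<^sub>F r in at_right (2 * m). \<bar>\<sigma> r\<bar> \<le> B\<close> obtain b where "2*m < b" "\<forall>y>2 * m. y < b \<longrightarrow> \<bar>\<sigma> y\<bar> \<le> B"
      unfolding eventually_at_right_field by auto
    thus ?thesis using that[of "b - 2*m"] by auto
  qed
  define c where "c = 2 * m * \<bar>K\<bar> / 3"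
  have cpos: "c > 0" using assms(1,2) by (simp add: c_def)
  define g where "g = (\<lambda>x. \<sigma> x - c * ln (x - 2 * m))"
  have mono: "g r \<le> g s" if "2*m < r" "r \<le> s" for r s
  proof (rule DERIV_nonneg_imp_nondecreasing[OF that(2)])
    fix x assume "r \<le> x" "x \<le> s"
    hence x: "x > 2 * m" using that by auto
    obtain d where hd: "(\<sigma> has_real_derivative d) (at x)"
      and eq: "(1 - 2 * m / x) * (3 / K) * d = cmc_v K 0 x / sqrt (cmc_P m K 0 x) + b_minus K"
      using assms(3) x unfolding ingoing_phase_solution_def by blast
    have lb: "d \<ge> c / (x - 2 * m)" using deriv_lower[OF assms(1,2) x eq] by (simp add: c_def)
    have "((\<lambda>x. ln (x - 2 * m)) has_real_derivative (1 / (x - 2 * m))) (at x)"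
      using x by (auto intro!: derivative_eq_intros)
    hence "(g has_real_derivative (d - c * (1 / (x - 2 * m)))) (at x)"
      unfolding g_def using hd x by (auto intro!: derivative_eq_intros)
    moreover have "d - c * (1 / (x - 2 * m)) \<ge> 0" using lb by simp
    ultimately show "\<exists>y. (g has_real_derivative y) (at x) \<and> 0 \<le> y" by blast
  qed
  define r0 where "r0 = 2 * m + \<delta> / 2"
  define A where "A = \<sigma> r0 - c * ln (r0 - 2 * m)"
  define t where "t = min (ln (\<delta> / 4)) ((- B - 1 - A) / c)"
  define r where "r = 2 * m + exp t"
  have "exp t \<le> exp (ln (\<delta> / 4))" unfolding t_def by simp
  hence et: "exp t \<le> \<delta> / 4" using dp by simp
  have r1: "2 * m < r" unfolding r_def by simp
  have r2: "r \<le> r0" using et dp unfolding r_def r0_def by simp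
  have r3: "r < 2 * m + \<delta>" using r2 dp unfolding r0_def by simp
  have "g r \<le> g r0" using mono r1 r2 by blast
  hence "\<sigma> r - c * t \<le> A" unfolding g_def A_def r_def by simp
  moreover have "c * t \<le> -B - 1 - A"
  proof -
    have "t \<le> (- B - 1 - A) / c" unfolding t_def by simp
    hence "c * t \<le> c * ((- B - 1 - A) / c)" using cpos by (intro mult_left_mono) auto
    thus ?thesis using cpos by simp
  qed
  ultimately have "\<sigma> r < - B" by linarith
  moreover have "\<bar>\<sigma> r\<bar> \<le> B" using bd r1 r3 by blast
  ultimately show False by linarith
qed

end
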